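(* Let $n\ge 4$, $\lambda=\frac{n-1}{2(n-2)}$, and consider $V_2\mathbb R^n=\mathrm{SO}(n)/\mathrm{SO}(n-2)$ with the decomposition $\mathfrak m=\mathfrak m_{12}\oplus\mathfrak m_{13}\oplus\mathfrak m_{23}$, $\mathfrak m_{12}=\mathbb R\xi_{12}$, $\mathfrak m_{13}=\mathrm{span}\{\xi_{1k}:3\le k\le n\}$, $\mathfrak m_{23}=\mathrm{span}\{\xi_{2k}:3\le k\le n\}$, and the (Einstein) metric $\Lambda=\mathrm{Id}_{\mathfrak m_{12}}+\lambda\,\mathrm{Id}_{\mathfrak m_{13}}+\lambda\,\mathrm{Id}_{\mathfrak m_{23}}$. A nonzero vector $X=a_{12}\xi_{12}+\sum_{k=3}^n(a_{1k}\xi_{1k}+a_{2k}\xi_{2k})$ satisfies $[X,\Lambda X]_{\mathfrak m}=0$ (i.e. $t\mapsto\exp(tX)\cdot o$ is a geodesic of this metric) if and only if either $a_{12}=0$ (i.e. $X\in\mathfrak m_{13}\oplus\mathfrak m_{23}$) or $X\in\mathbb R\xi_{12}$.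
   Context: $E_{ab}$ is the $n\times n$ matrix with $1$ in entry $(a,b)$ and $0$ elsewhere; $\xi_{ab}=E_{ab}-E_{ba}$; $\mathrm{SO}(n-2)$ acts on the last $n-2$ coordinates. $\mathfrak m$ is the orthogonal complement of $\mathfrak{so}(n-2)$ in $\mathfrak{so}(n)$ with respect to the negative of the Killing form $B$; the metric is $\langle X,Y\rangle=B(\Lambda X,Y)$; $[\cdot,\cdot]_{\mathfrak m}$ is the $\mathfrak m$-component of the bracket. *)

theory Defs
  imports "HOL-Analysis.Analysis"
begin

text \<open>n x n real matrices are modelled as functions nat => nat => real, indices 1..n
  (entries outside 1..n are zero for all matrices built below).\<close>

definition E :: "nat \<Rightarrow> nat \<Rightarrow> nat \<Rightarrow> nat \<Rightarrow> real" where
  "E a b = (\<lambda>i j. if i = a \<and> j = b then 1 else 0)"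

definition xi :: "nat \<Rightarrow> nat \<Rightarrow> nat \<Rightarrow> nat \<Rightarrow> real" where
  "xi a b = (\<lambda>i j. E a b i j - E b a i j)"

definition mmul :: "nat \<Rightarrow> (nat \<Rightarrow> nat \<Rightarrow> real) \<Rightarrow> (nat \<Rightarrow> nat \<Rightarrow> real) \<Rightarrow> nat \<Rightarrow> nat \<Rightarrow> real" where
  "mmul n A B = (\<lambda>i j. \<Sum>k=1..n. A i k * B k j)"

definition lie_bracket :: "nat \<Rightarrow> (nat \<Rightarrow> nat \<Rightarrow> real) \<Rightarrow> (nat \<Rightarrow> nat \<Rightarrow> real) \<Rightarrow> nat \<Rightarrow> nat \<Rightarrow> real" where
  "lie_bracket n A B = (\<lambda>i j. mmul n A B i j - mmul n B A i j)"

text \<open>The m-component of an element of so(n): so(n-2) is the lower-right block on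
  coordinates 3..n; its orthogonal complement m w.r.t. the (negative) Killing form
  consists of the skew matrices whose lower-right block vanishes, so the m-component
  is obtained by zeroing that block.\<close>
definition m_comp :: "(nat \<Rightarrow> nat \<Rightarrow> real) \<Rightarrow> nat \<Rightarrow> nat \<Rightarrow> real" where
  "m_comp Z = (\<lambda>i j. if 3 \<le> i \<and> 3 \<le> j then 0 else Z i j)"

definition vecX :: "nat \<Rightarrow> real \<Rightarrow> (nat \<Rightarrow> real) \<Rightarrow> (nat \<Rightarrow> real) \<Rightarrow> nat \<Rightarrow> nat \<Rightarrow> real" where
  "vecX n a12 a1 a2 = (\<lambda>i j. a12 * xi 1 2 i j
      + (\<Sum>k=3..n. a1 k * xi 1 k i j + a2 k * xi 2 k i j))"

definition LambdaOp :: "real \<Rightarrow> (nat \<Rightarrow> nat \<Rightarrow> real) \<Rightarrow> nat \<Rightarrow> nat \<Rightarrow> real" where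
  "LambdaOp lam Z = (\<lambda>i j. if (i = 1 \<and> j = 2) \<or> (i = 2 \<and> j = 1) then Z i j else lam * Z i j)"

end

theory Submission imports Defs begin
lemma s1: "(\<Sum>k=3..(n::nat). f k * (if i = a \<and> j = k then 1 else 0)) = (if i = a \<and> 3 \<le> j \<and> j \<le> n then f j else (0::real))"
  by (cases "i = a") (auto simp: sum.delta sum.delta' if_distrib cong: if_cong)
lemma s2: "(\<Sum>k=3..(n::nat). f k * (if i = k \<and> j = a then 1 else 0)) = (if j = a \<and> 3 \<le> i \<and> i \<le> n then f i else (0::real))"
  by (cases "j = a") (auto simp: sum.delta sum.delta' if_distrib cong: if_cong)
lemma vecX_eq: "vecX n a12 a1 a2 i j =
  (if i=1\<and>j=2 then a12 else if i=2\<and>j=1 then -a12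
   else if i=1 \<and> 3\<le>j\<and>j\<le>n then a1 j else if i=2 \<and> 3\<le>j \<and> j\<le>n then a2 j
   else if j=1 \<and> 3\<le>i\<and>i\<le>n then -a1 i else if j=2 \<and> 3\<le>i \<and> i\<le>n then -a2 i else 0)"
  unfolding vecX_def xi_def E_def
  by (simp add: sum.distrib sum_subtractf right_diff_distrib s1 s2 del: mult_if_delta)

lemma sum_split12: "2 \<le> (n::nat) \<Longrightarrow> (\<Sum>k=1..n. f k) = f 1 + f 2 + (\<Sum>k=3..n. (f k::real))"
  by (simp add: sum.atLeast_Suc_atMost numeral_eq_Suc)

lemma lam_ne1: "4 \<le> (n::nat) \<Longrightarrow> (real n - 1) / (2 * (real n - 2)) \<noteq> 1"
  by (simp add: field_simps)

theorem mainTheorem4: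
  fixes n :: nat and a12 :: real and a1 a2 :: "nat \<Rightarrow> real"
  assumes "n \<ge> 4"
    and "vecX n a12 a1 a2 \<noteq> (\<lambda>i j. 0)"
  shows "m_comp (lie_bracket n (vecX n a12 a1 a2)
            (LambdaOp ((real n - 1) / (2 * (real n - 2))) (vecX n a12 a1 a2))) = (\<lambda>i j. 0)
         \<longleftrightarrow> (a12 = 0 \<or> (\<exists>c::real. vecX n a12 a1 a2 = (\<lambda>i j. c * xi 1 2 i j)))"
proof -
  define l where "l = (real n - 1) / (2 * (real n - 2))"
  define X where "X = vecX n a12 a1 a2"
  define L where "L = LambdaOp l X"
  have l1: "l \<noteq> 1" using lam_ne1[OF assms(1)] by (simp add: l_def)
  have n2: "2 \<le> n" using assms(1) by simp
  have Xe: "\<And>i j. X i j = (if i=1\<and>j=2 then a12 else if i=2\<and>j=1 then -a12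
   else if i=1 \<and> 3\<le>j\<and>j\<le>n then a1 j else if i=2 \<and> 3\<le>j \<and> j\<le>n then a2 j
   else if j=1 \<and> 3\<le>i\<and>i\<le>n then -a1 i else if j=2 \<and> 3\<le>i \<and> i\<le>n then -a2 i else 0)"
    unfolding X_def by (rule vecX_eq)
  have Le: "\<And>i j. L i j = (if (i = 1 \<and> j = 2) \<or> (i = 2 \<and> j = 1) then X i j else l * X i j)"
    unfolding L_def LambdaOp_def by simp
  have z: "\<And>f. (\<Sum>m=3..n. f m * 0) = (0::real)" by simp
  have e2: "lie_bracket n X L 2 k = a12 * a1 k * (1 - l)" if k: "3 \<le> k" "k \<le> n" for k
  proof -
    have A: "mmul n X L 2 k = - a12 * (l * a1 k)"
      unfolding mmul_def sum_split12[OF n2] using k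
      by (simp add: Xe Le sum.neutral)
    have B: "mmul n L X 2 k = - a12 * a1 k"
      unfolding mmul_def sum_split12[OF n2] using k
      by (simp add: Xe Le sum.neutral)
    show ?thesis unfolding lie_bracket_def A B by (simp add: algebra_simps)
  qed
  have e1: "lie_bracket n X L 1 k = a12 * a2 k * (l - 1)" if k: "3 \<le> k" "k \<le> n" for k
  proof -
    have A: "mmul n X L 1 k = a12 * (l * a2 k)"
      unfolding mmul_def sum_split12[OF n2] using k
      by (simp add: Xe Le sum.neutral)
    have B: "mmul n L X 1 k = a12 * a2 k"
      unfolding mmul_def sum_split12[OF n2] using k
      by (simp add: Xe Le sum.neutral)
    show ?thesis unfolding lie_bracket_def A B by (simp add: algebra_simps)
  qed
  have "m_comp (lie_bracket n X L) = (\<lambda>i j. 0) \<longleftrightarrow> (a12 = 0 \<or> (\<exists>c::real. X = (\<lambda>i j. c * xi 1 2 i j)))"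
  proof
    assume H: "m_comp (lie_bracket n X L) = (\<lambda>i j. 0)"
    show "a12 = 0 \<or> (\<exists>c::real. X = (\<lambda>i j. c * xi 1 2 i j))"
    proof (cases "a12 = 0")
      case False
      have "a1 k = 0 \<and> a2 k = 0" if k: "3 \<le> k" "k \<le> n" for k
      proof -
        have "m_comp (lie_bracket n X L) 2 k = 0" "m_comp (lie_bracket n X L) 1 k = 0"
          using H by simp_all
        hence "a12 * a1 k * (1 - l) = 0" "a12 * a2 k * (l - 1) = 0"
          using e1[OF k] e2[OF k] by (simp_all add: m_comp_def)
        thus ?thesis using False l1 by simp
      qed
      hence "X = (\<lambda>i j. a12 * xi 1 2 i j)"
        by (intro ext) (auto simp: Xe xi_def E_def)
      thus ?thesis by blast
    qed simp
  next
    assume H: "a12 = 0 \<or> (\<exists>c::real. X = (\<lambda>i j. c * xi 1 2 i j))"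
    show "m_comp (lie_bracket n X L) = (\<lambda>i j. 0)"
    proof (cases "a12 = 0")
      case True
      have "L = (\<lambda>i j. l * X i j)"
        by (intro ext) (auto simp: Le Xe True)
      hence "lie_bracket n X L = (\<lambda>i j. 0)"
        by (simp add: lie_bracket_def mmul_def sum_distrib_left algebra_simps)
      thus ?thesis by (simp add: m_comp_def)
    next
      case False
      then obtain c where c: "X = (\<lambda>i j. c * xi 1 2 i j)" using H by blast
      have "L = X"
        by (intro ext) (auto simp: Le c xi_def E_def)
      thus ?thesis by (simp add: lie_bracket_def m_comp_def)
    qed
  qed
  thus ?thesis by (simp add: X_def L_def l_def)
qed

end
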